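(* Let $\langle E,\rightarrow\rangle$ be a computation, $b$ a regular predicate, and $e\in E$. Then $J_b(e)$ is a join-irreducible element of the distributive lattice $\langle \mathcal{C}_b(E);\subseteq\rangle$.
   Context: A computation is a directed graph $\langle E, \rightarrow\rangle$ whose vertices (events) are partitioned among processes $p_1,\dots,p_n$, each process $p_i$ having an initial event $\bot_i$ and a final event $\top_i$; $\top$ denotes the set of final events. A subset $C\subseteq E$ is a consistent cut if for every edge $(u,v)$, $v\in C$ implies $u\in C$; $\emptyset$ and $E$ are trivial. A predicate is regular if whenever consistent cuts $C_1,C_2$ satisfy it, so do $C_1\cap C_2$ and $C_1\cup C_2$. $\mathcal{C}_b(E)$ denotes the set of non-trivial consistent cuts of $\langle E,\rightarrow\rangle$ satisfying $b$ together with the two trivial cuts $\emptyset$ and $E$ (the trivial cuts are treated as satisfying $b$); ordered by inclusion it is a distributive lattice with join $\cup$ and meet $\cap$. For an event $e$, $J_b(e)$ is the least consistent cut of $\langle E,\rightarrow\rangle$ that satisfies $b$ and contains $e$; if no such cut exists or $e\in\top$, $J_b(e)=E$. An element $a$ of a lattice is join-irreducible if it is not the least element and $a=x\sqcup y$ implies $a=x$ or $a=y$. *)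

theory Defs
  imports Main
begin

text \<open>A computation: events E, edge relation R (u,v) meaning u -> v, n processes
  indexed by {..<n}, proc assigns each event its process, ini i / fin i (\<bottom>_i, \<top>_i) are the
  initial / final events of process i. Following the standard convention of the
  slicing framework, all initial events are mutually connected and all final
  events are mutually connected, so a non-trivial consistent cut contains all
  initial events and no final event.\<close>

definition computation ::
  "'e set \<Rightarrow> ('e \<times> 'e) set \<Rightarrow> nat \<Rightarrow> ('e \<Rightarrow> nat) \<Rightarrow> (nat \<Rightarrow> 'e) \<Rightarrow> (nat \<Rightarrow> 'e) \<Rightarrow> bool" where
  "computation E R n proc ini fin \<longleftrightarrow>
     finite E \<and> 0 < n \<and> R \<subseteq> E \<times> E \<and>
     (\<forall>e\<in>E. proc e < n) \<and>
     (\<forall>i<n. ini i \<in> E \<and> fin i \<in> E \<and> proc (ini i) = i \<and> proc (fin i) = i \<and> ini i \<noteq> fin i) \<and>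
     (\<forall>e\<in>E. (ini (proc e), e) \<in> R\<^sup>* \<and> (e, fin (proc e)) \<in> R\<^sup>*) \<and>
     (\<forall>e\<in>E. \<forall>f\<in>E. proc e = proc f \<longrightarrow> (e, f) \<in> R\<^sup>* \<or> (f, e) \<in> R\<^sup>*) \<and>
     (\<forall>i<n. \<forall>j<n. i \<noteq> j \<longrightarrow> (ini i, ini j) \<in> R \<and> (fin i, fin j) \<in> R)"

definition consistent_cut :: "'e set \<Rightarrow> ('e \<times> 'e) set \<Rightarrow> 'e set \<Rightarrow> bool" where
  "consistent_cut E R C \<longleftrightarrow> C \<subseteq> E \<and> (\<forall>(u, v)\<in>R. v \<in> C \<longrightarrow> u \<in> C)"

definition regular :: "'e set \<Rightarrow> ('e \<times> 'e) set \<Rightarrow> ('e set \<Rightarrow> bool) \<Rightarrow> bool" where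
  "regular E R b \<longleftrightarrow>
     (\<forall>C1 C2. consistent_cut E R C1 \<and> b C1 \<and> consistent_cut E R C2 \<and> b C2 \<longrightarrow>
        b (C1 \<inter> C2) \<and> b (C1 \<union> C2))"

definition sat :: "'e set \<Rightarrow> ('e set \<Rightarrow> bool) \<Rightarrow> 'e set \<Rightarrow> bool" where
  "sat E b C \<longleftrightarrow> C = {} \<or> C = E \<or> b C"

definition Cb :: "'e set \<Rightarrow> ('e \<times> 'e) set \<Rightarrow> ('e set \<Rightarrow> bool) \<Rightarrow> 'e set set" where
  "Cb E R b = {C. consistent_cut E R C \<and> sat E b C}"

definition least_b_cut :: "'e set \<Rightarrow> ('e \<times> 'e) set \<Rightarrow> ('e set \<Rightarrow> bool) \<Rightarrow> 'e \<Rightarrow> 'e set \<Rightarrow> bool" where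
  "least_b_cut E R b e C \<longleftrightarrow> consistent_cut E R C \<and> sat E b C \<and> e \<in> C \<and>
     (\<forall>D. consistent_cut E R D \<and> sat E b D \<and> e \<in> D \<longrightarrow> C \<subseteq> D)"

text \<open>J_b(e); Tops is the set of final events.\<close>
definition Jb :: "'e set \<Rightarrow> ('e \<times> 'e) set \<Rightarrow> 'e set \<Rightarrow> ('e set \<Rightarrow> bool) \<Rightarrow> 'e \<Rightarrow> 'e set" where
  "Jb E R Tops b e =
     (if e \<in> Tops \<or> \<not> (\<exists>C. least_b_cut E R b e C) then E
      else (THE C. least_b_cut E R b e C))"

definition join_irreducible :: "'e set set \<Rightarrow> 'e set \<Rightarrow> bool" where
  "join_irreducible L a \<longleftrightarrow> a \<in> L \<and> \<not> (\<forall>x\<in>L. a \<subseteq> x) \<and>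
     (\<forall>x\<in>L. \<forall>y\<in>L. a = x \<union> y \<longrightarrow> a = x \<or> a = y)"

end

theory Submission
  imports Defs
begin

lemma cut_closed:
  assumes "consistent_cut E R C" "(u, v) \<in> R\<^sup>*" "v \<in> C"
  shows "u \<in> C"
  using assms(2,3)
proof (induction rule: converse_rtrancl_induct)
  case base then show ?case .
next
  case (step y z)
  then show ?case using assms(1) unfolding consistent_cut_def by blast
qed

lemma fin_full:
  assumes "computation E R n proc ini fin" "consistent_cut E R C" "j < n" "fin j \<in> C"
  shows "C = E"
proof
  show "C \<subseteq> E" using assms(2) unfolding consistent_cut_def by blast
  show "E \<subseteq> C"
  proof
    fix f assume f: "f \<in> E"
    have pn: "proc f < n" using assms(1) f unfolding computation_def by blast
    have "fin (proc f) \<in> C"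
    proof (cases "proc f = j")
      case True then show ?thesis using assms(4) by simp
    next
      case False
      then have "(fin (proc f), fin j) \<in> R" using assms(1,3) pn unfolding computation_def by blast
      then show ?thesis using assms(2,4) unfolding consistent_cut_def by blast
    qed
    moreover have "(f, fin (proc f)) \<in> R\<^sup>*" using assms(1) f unfolding computation_def by blast
    ultimately show "f \<in> C" using cut_closed[OF assms(2)] by blast
  qed
qed

theorem lemma4:
  fixes E :: "'e set" and R :: "('e \<times> 'e) set" and n :: nat
    and proc :: "'e \<Rightarrow> nat" and ini fin :: "nat \<Rightarrow> 'e"
    and b :: "'e set \<Rightarrow> bool" and e :: 'e
  assumes "computation E R n proc ini fin"
    and "regular E R b"
    and "e \<in> E"
  shows "join_irreducible (Cb E R b) (Jb E R (fin ` {..<n}) b e)"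
proof -
  have emp: "{} \<in> Cb E R b" unfolding Cb_def consistent_cut_def sat_def by simp
  have RE: "R \<subseteq> E \<times> E" "0 < n" "fin 0 \<in> E" using assms(1) unfolding computation_def by auto
  show ?thesis
  proof (cases "e \<in> fin ` {..<n} \<or> \<not> (\<exists>C. least_b_cut E R b e C)")
    case True
    then have J: "Jb E R (fin ` {..<n}) b e = E" unfolding Jb_def by simp
    have EL: "E \<in> Cb E R b" using RE unfolding Cb_def consistent_cut_def sat_def by auto
    show ?thesis unfolding J join_irreducible_def
    proof (intro conjI ballI impI EL)
      show "\<not> (\<forall>x\<in>Cb E R b. E \<subseteq> x)" using emp assms(3) by blast
    next
      fix x y assume x: "x \<in> Cb E R b" and y: "y \<in> Cb E R b" and xy: "E = x \<union> y"
      then have "fin 0 \<in> x \<or> fin 0 \<in> y" using RE by blast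
      then show "E = x \<or> E = y"
        using fin_full[OF assms(1) _ RE(2)] x y unfolding Cb_def by blast
    qed
  next
    case False
    then obtain C where C: "least_b_cut E R b e C" by blast
    have "(THE C. least_b_cut E R b e C) = C"
    proof (rule the_equality[where P="least_b_cut E R b e", OF C])
      fix D assume "least_b_cut E R b e D"
      then show "D = C" using C unfolding least_b_cut_def by blast
    qed
    then have J: "Jb E R (fin ` {..<n}) b e = C" using False unfolding Jb_def by simp
    have CL: "C \<in> Cb E R b" using C unfolding Cb_def least_b_cut_def by blast
    show ?thesis unfolding J join_irreducible_def
    proof (intro conjI ballI impI CL)
      show "\<not> (\<forall>x\<in>Cb E R b. C \<subseteq> x)" using emp C unfolding least_b_cut_def by blast
    next
      fix x y assume x: "x \<in> Cb E R b" and y: "y \<in> Cb E R b" and xy: "C = x \<union> y"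
      have "e \<in> x \<or> e \<in> y" using C xy unfolding least_b_cut_def by blast
      then show "C = x \<or> C = y"
        using C x y xy unfolding least_b_cut_def Cb_def by blast
    qed
  qed
qed

end
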